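(* Let $G=(V,w,m)$ be a locally finite measured weighted graph and let $K>0$. Suppose $\operatorname{Deg}_{\max}\le1$, $m(V)=\sum_{x\in V}m(x)=1$, and $\kappa(x,y)\ge K$ for all $x\neq y\in V$. Let $f\in\ell^1(V,m)$ satisfy $\langle f\rangle=0$ and $\|\nabla f\|_\infty\le1$. Then for every $r>0$, $$m(\{x\in V: f(x)>r\})\le e^{-Kr^2}.$$
   Context: A measured weighted graph $G=(V,w,m)$: countable $V$, symmetric $w:V\times V\to[0,\infty)$ vanishing on the diagonal, $m:V\to(0,\infty)$; $x\sim y$ iff $w(x,y)>0$; locally finite means each vertex has finitely many neighbours. $q(x,y):=w(x,y)/m(x)$, $\Delta f(x):=\sum_y q(x,y)(f(y)-f(x))$, $\operatorname{Deg}_{\max}:=\sup_x\sum_y q(x,y)$. $d$ is the combinatorial graph distance. For $x\ne y$, $\nabla_{xy}f:=(f(x)-f(y))/d(x,y)$, $\|\nabla f\|_\infty:=\sup_{x\sim y}\nabla_{xy}f$, and the Ollivier curvature is $\kappa(x,y):=\inf\{\nabla_{xy}\Delta f: \nabla_{yx}f=1,\ \|\nabla f\|_\infty=1\}$. $\ell^1(V,m)=\{g:V\to\mathbb{R}:\sum_x m(x)|g(x)|<\infty\}$, $\langle g\rangle:=\sum_x m(x)g(x)$, and $m(A):=\sum_{x\in A}m(x)$. *)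

theory Defs
  imports "HOL-Analysis.Analysis"
begin

definition mwgraph :: "('v::countable \<Rightarrow> 'v \<Rightarrow> real) \<Rightarrow> ('v \<Rightarrow> real) \<Rightarrow> bool" where
  "mwgraph w m \<longleftrightarrow> (\<forall>x y. w x y = w y x) \<and> (\<forall>x y. 0 \<le> w x y) \<and> (\<forall>x. w x x = 0)
      \<and> (\<forall>x. 0 < m x)"

definition adj :: "('v \<Rightarrow> 'v \<Rightarrow> real) \<Rightarrow> 'v \<Rightarrow> 'v \<Rightarrow> bool" where
  "adj w x y \<longleftrightarrow> 0 < w x y"

definition nbrs :: "('v \<Rightarrow> 'v \<Rightarrow> real) \<Rightarrow> 'v \<Rightarrow> 'v set" where
  "nbrs w x = {y. adj w x y}"

definition locally_finite :: "('v \<Rightarrow> 'v \<Rightarrow> real) \<Rightarrow> bool" where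
  "locally_finite w \<longleftrightarrow> (\<forall>x. finite (nbrs w x))"

definition connected_graph :: "('v \<Rightarrow> 'v \<Rightarrow> real) \<Rightarrow> bool" where
  "connected_graph w \<longleftrightarrow> (\<forall>x y. \<exists>n. (adj w ^^ n) x y)"

definition gdist :: "('v \<Rightarrow> 'v \<Rightarrow> real) \<Rightarrow> 'v \<Rightarrow> 'v \<Rightarrow> nat" where
  "gdist w x y = (LEAST n. (adj w ^^ n) x y)"

definition qrate :: "('v \<Rightarrow> 'v \<Rightarrow> real) \<Rightarrow> ('v \<Rightarrow> real) \<Rightarrow> 'v \<Rightarrow> 'v \<Rightarrow> real" where
  "qrate w m x y = w x y / m x"

text \<open>Laplacian; sum over the (finite) neighbourhood, other terms vanish.\<close>
definition laplacian :: "('v \<Rightarrow> 'v \<Rightarrow> real) \<Rightarrow> ('v \<Rightarrow> real) \<Rightarrow> ('v \<Rightarrow> real) \<Rightarrow> 'v \<Rightarrow> real" where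
  "laplacian w m f x = (\<Sum>y\<in>nbrs w x. qrate w m x y * (f y - f x))"

definition Deg_max :: "('v \<Rightarrow> 'v \<Rightarrow> real) \<Rightarrow> ('v \<Rightarrow> real) \<Rightarrow> ereal" where
  "Deg_max w m = (SUP x. ereal (\<Sum>y\<in>nbrs w x. qrate w m x y))"

definition grad :: "('v \<Rightarrow> 'v \<Rightarrow> real) \<Rightarrow> ('v \<Rightarrow> real) \<Rightarrow> 'v \<Rightarrow> 'v \<Rightarrow> real" where
  "grad w f x y = (f x - f y) / real (gdist w x y)"

definition grad_norm :: "('v \<Rightarrow> 'v \<Rightarrow> real) \<Rightarrow> ('v \<Rightarrow> real) \<Rightarrow> ereal" where
  "grad_norm w f = (SUP p\<in>{(x, y). adj w x y}. ereal (grad w f (fst p) (snd p)))"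

definition ollivier :: "('v \<Rightarrow> 'v \<Rightarrow> real) \<Rightarrow> ('v \<Rightarrow> real) \<Rightarrow> 'v \<Rightarrow> 'v \<Rightarrow> ereal" where
  "ollivier w m x y = (INF f\<in>{f. grad w f y x = 1 \<and> grad_norm w f = 1}.
       ereal (grad w (laplacian w m f) x y))"

end

theory Submission imports Defs "HOL-Library.Function_Algebras" begin


locale cgraph =
  fixes w :: "'v::countable \<Rightarrow> 'v \<Rightarrow> real" and m :: "'v \<Rightarrow> real" and K :: real
  assumes mw: "mwgraph w m" and lf: "locally_finite w" and conn: "connected_graph w"
    and Kpos: "K > 0" and deg: "Deg_max w m \<le> 1"
    and curv: "\<forall>x y. x \<noteq> y \<longrightarrow> ollivier w m x y \<ge> ereal K"
begin

lemma wsym: "w x y = w y x" using mw unfolding mwgraph_def by auto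
lemma wnn: "0 \<le> w x y" using mw unfolding mwgraph_def by auto
lemma wdiag: "w x x = 0" using mw unfolding mwgraph_def by auto
lemma mpos: "0 < m x" using mw unfolding mwgraph_def by auto

lemma adj_sym: "adj w x y = adj w y x" by (simp add: adj_def wsym)
lemma adj_irr: "\<not> adj w x x" by (simp add: adj_def wdiag)
lemma not_adj_w: "\<not> adj w x y \<Longrightarrow> w x y = 0" using wnn[of x y] by (auto simp: adj_def)

lemma pow_sym: "(adj w ^^ n) x y \<Longrightarrow> (adj w ^^ n) y x"
proof (induction n arbitrary: x y)
  case 0 then show ?case by auto
next
  case (Suc n)
  from Suc.prems obtain z where "(adj w ^^ n) x z" "adj w z y" by (rule relpowp_Suc_E)
  then have "adj w y z" "(adj w ^^ n) z x" using Suc.IH adj_sym by auto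
  then show ?case by (rule relpowp_Suc_I2)
qed

abbreviation d where "d \<equiv> gdist w"

lemma d_path: "(adj w ^^ d x y) x y"
proof -
  have "\<exists>n. (adj w ^^ n) x y" using conn unfolding connected_graph_def by blast
  then show ?thesis unfolding gdist_def by (rule LeastI_ex)
qed

lemma d_le: "(adj w ^^ n) x y \<Longrightarrow> d x y \<le> n"
  unfolding gdist_def by (rule Least_le)

lemma d_refl[simp]: "d x x = 0" using d_le[of 0 x x] by auto

lemma d_zero: "d x y = 0 \<Longrightarrow> x = y" using d_path[of x y] by auto

lemma d_sym: "d x y = d y x"
  by (meson antisym d_le d_path pow_sym)

lemma d_adj: "adj w x y \<Longrightarrow> d x y = 1"
proof -
  assume a: "adj w x y"
  have "d x y \<le> 1" using d_le[of 1 x y] a by auto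
  moreover have "d x y \<noteq> 0" using d_zero adj_irr a by blast
  ultimately show ?thesis by linarith
qed

lemma d_step: assumes "adj w y z" shows "d x z \<le> d x y + 1"
proof -
  have "(adj w ^^ Suc (d x y)) x z" using d_path[of x y] assms by (rule relpowp_Suc_I)
  then show ?thesis using d_le by fastforce
qed

lemma deg_le: "(\<Sum>y\<in>nbrs w x. qrate w m x y) \<le> 1"
proof -
  have "ereal (\<Sum>y\<in>nbrs w x. qrate w m x y) \<le> Deg_max w m"
    unfolding Deg_max_def by (rule SUP_upper) auto
  then have "ereal (\<Sum>y\<in>nbrs w x. qrate w m x y) \<le> 1" using deg by (rule order.trans)
  then show ?thesis by simp
qed

lemma q_nn: "0 \<le> qrate w m x y" unfolding qrate_def by (rule divide_nonneg_pos[OF wnn mpos])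

lemma lip_edge:
  assumes "grad_norm w g \<le> 1" "adj w a b"
  shows "g a - g b \<le> 1"
proof -
  have "ereal (grad w g a b) \<le> grad_norm w g"
  proof -
    have "(a,b) \<in> {(x, y). adj w x y}" using assms(2) by simp
    then have "ereal (grad w g (fst (a,b)) (snd (a,b))) \<le> (SUP p\<in>{(x, y). adj w x y}. ereal (grad w g (fst p) (snd p)))"
      by (rule SUP_upper)
    then show ?thesis unfolding grad_norm_def by simp
  qed
  then have "ereal (grad w g a b) \<le> 1" using assms(1) by (rule order.trans)
  then show ?thesis using d_adj[OF assms(2)] by (simp add: grad_def)
qed

lemma diam: assumes "x \<noteq> y" shows "real (d x y) \<le> 2 / K"
proof -
  define f where "f = (\<lambda>z. real (d x z))"
  have dpos: "d x y > 0" using d_zero assms by blast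
  obtain k where k: "d x y = Suc k" using dpos gr0_implies_Suc by blast
  obtain z where z: "adj w x z" using d_path[of x y] k by (metis relpowp_Suc_D2)
  have t1: "grad w f y x = 1" unfolding grad_def f_def using dpos d_sym[of x y] by simp
  have t2: "grad_norm w f = 1"
    unfolding grad_norm_def
  proof (rule antisym)
    show "(SUP p\<in>{(x, y). adj w x y}. ereal (grad w f (fst p) (snd p))) \<le> 1"
    proof (rule SUP_least)
      fix p assume "p \<in> {(x, y). adj w x y}"
      then obtain a b where p: "p = (a,b)" "adj w a b" by auto
      have "d x a \<le> d x b + 1" using d_step[of b a x] p adj_sym by auto
      then show "ereal (grad w f (fst p) (snd p)) \<le> 1"
        using p d_adj[OF p(2)] by (simp add: grad_def f_def)
    qed
    show "1 \<le> (SUP p\<in>{(x, y). adj w x y}. ereal (grad w f (fst p) (snd p)))"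
      apply (rule SUP_upper2[of "(z,x)"])
      using z adj_sym d_adj[of z x] d_adj[of x z] by (auto simp: grad_def f_def)
  qed
  have "ereal K \<le> ollivier w m x y" using curv assms by auto
  also have "\<dots> \<le> ereal (grad w (laplacian w m f) x y)"
    unfolding ollivier_def by (rule INF_lower) (use t1 t2 in auto)
  finally have K1: "K \<le> grad w (laplacian w m f) x y" by simp
  have l1: "laplacian w m f x \<le> 1"
  proof -
    have "laplacian w m f x = (\<Sum>z\<in>nbrs w x. qrate w m x z)"
      unfolding laplacian_def f_def by (intro sum.cong) (auto simp: nbrs_def d_adj)
    then show ?thesis using deg_le by simp
  qed
  have l2: "laplacian w m f y \<ge> -1"
  proof -
    have "laplacian w m f y \<ge> (\<Sum>z\<in>nbrs w y. qrate w m y z * (-1))"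
      unfolding laplacian_def f_def
    proof (intro sum_mono)
      fix z assume "z \<in> nbrs w y"
      then have "d x y \<le> d x z + 1" using d_step[of z y x] adj_sym by (auto simp: nbrs_def)
      then show "qrate w m y z * (-1) \<le> qrate w m y z * (real (d x z) - real (d x y))"
        using q_nn[of y z] by (intro mult_left_mono) auto
    qed
    then show ?thesis using deg_le[of y] by (simp add: sum_negf)
  qed
  have Dp: "real (d x y) > 0" using dpos by simp
  have "K * real (d x y) \<le> laplacian w m f x - laplacian w m f y"
    using K1 Dp unfolding grad_def by (simp add: pos_le_divide_eq)
  then have "K * real (d x y) \<le> 2" using l1 l2 by linarith
  then have "real (d x y) * K \<le> 2" by (simp add: mult.commute)
  then show ?thesis using Kpos by (simp add: pos_le_divide_eq)
qed

lemma finite_V: "finite (UNIV :: 'v set)"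
proof -
  obtain x0 :: 'v where True by auto
  define R where "R n = {y. \<exists>k\<le>n. (adj w ^^ k) x0 y}" for n
  have fin: "finite (R n)" for n
  proof (induction n)
    case 0
    have "R 0 = {x0}" unfolding R_def by auto
    then show ?case by simp
  next
    case (Suc n)
    have "R (Suc n) \<subseteq> R n \<union> (\<Union>z\<in>R n. nbrs w z)"
    proof
      fix y assume "y \<in> R (Suc n)"
      then obtain k where k: "k \<le> Suc n" "(adj w ^^ k) x0 y" unfolding R_def by auto
      show "y \<in> R n \<union> (\<Union>z\<in>R n. nbrs w z)"
      proof (cases "k \<le> n")
        case True then show ?thesis using k unfolding R_def by auto
      next
        case False
        then have "k = Suc n" using k by auto
        then obtain z where "(adj w ^^ n) x0 z" "adj w z y" using k by (metis relpowp_Suc_E)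
        then show ?thesis unfolding R_def nbrs_def by auto
      qed
    qed
    moreover have "finite (\<Union>z\<in>R n. nbrs w z)" using Suc lf unfolding locally_finite_def by auto
    ultimately show ?case using Suc finite_subset by blast
  qed
  have "UNIV \<subseteq> R (nat \<lceil>2 / K\<rceil>)"
  proof
    fix y
    have "d x0 y \<le> nat \<lceil>2 / K\<rceil>"
    proof (cases "x0 = y")
      case False
      then have "real (d x0 y) \<le> 2 / K" by (rule diam)
      then show ?thesis by linarith
    qed simp
    then show "y \<in> R (nat \<lceil>2 / K\<rceil>)" unfolding R_def using d_path[of x0 y] by auto
  qed
  then show ?thesis using fin finite_subset by blast
qed

end



lemma sum_fun_apply: "(sum F A) x = (\<Sum>a\<in>A. F a x)" for F :: "'a \<Rightarrow> 'b \<Rightarrow> real"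
proof (cases "finite A")
  case True then show ?thesis by (induction A rule: finite_induct) (auto simp: plus_fun_def)
qed (simp add: zero_fun_def)

lemma inj_surj_fun:
  fixes T :: "('v \<Rightarrow> real) \<Rightarrow> ('v \<Rightarrow> real)"
  assumes fin: "finite (UNIV::'v set)"
    and add: "\<And>u v. T (u + v) = T u + T v"
    and scl: "\<And>c u. T (\<lambda>x. c * u x) = (\<lambda>x. c * T u x)"
    and inj: "inj T"
  shows "surj T"
proof -
  define sc :: "real \<Rightarrow> ('v \<Rightarrow> real) \<Rightarrow> ('v \<Rightarrow> real)" where "sc = (\<lambda>c u. (\<lambda>x. c * u x))"
  interpret vs: vector_space sc
    by unfold_locales (auto simp: sc_def algebra_simps fun_eq_iff plus_fun_def)
  obtain B where B: "vs.independent B" "UNIV \<subseteq> vs.span B"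
    using vs.basis_exists[of UNIV] by blast
  define S :: "('v \<Rightarrow> real) set" where "S = (\<lambda>a::'v. (\<lambda>x. if x = a then (1::real) else 0)) ` UNIV"
  have finS: "finite S" unfolding S_def by (rule finite_imageI[OF fin])
  have spS: "u \<in> vs.span S" for u
  proof -
    have "u = (\<Sum>a\<in>UNIV. sc (u a) (\<lambda>x. if x = a then 1 else 0))"
    proof (rule ext)
      fix x
      have "(\<Sum>a\<in>UNIV. sc (u a) (\<lambda>x. if x = a then 1 else 0)) x = (\<Sum>a\<in>UNIV. if x = a then u a else 0)"
        unfolding sum_fun_apply sc_def by (rule sum.cong) auto
      also have "\<dots> = u x" using fin by simp
      finally show "u x = (\<Sum>a\<in>UNIV. sc (u a) (\<lambda>x. if x = a then 1 else 0)) x" by simp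
    qed
    also have "\<dots> \<in> vs.span S"
      by (intro vs.span_sum vs.span_scale vs.span_base) (auto simp: S_def)
    finally show ?thesis .
  qed
  have finB: "finite B" using vs.independent_span_bound[OF finS B(1)] spS by blast
  interpret fd: finite_dimensional_vector_space sc B
    by unfold_locales (use finB B in auto)
  have lin: "Vector_Spaces.linear sc sc T"
    unfolding Vector_Spaces.linear_iff using vs.vector_space_axioms add scl by (auto simp: sc_def)
  show ?thesis by (rule fd.linear_inj_imp_surj[OF lin inj])
qed




context cgraph begin

lemma finV[simp]: "finite (UNIV :: 'v set)" by (rule finite_V)

lemma lap_univ: "laplacian w m u x = (\<Sum>z\<in>UNIV. qrate w m x z * (u z - u x))"
  unfolding laplacian_def
  by (rule sum.mono_neutral_left) (auto simp: nbrs_def qrate_def not_adj_w)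

lemma mlap: "m x * laplacian w m u x = (\<Sum>z\<in>UNIV. w x z * (u z - u x))"
proof -
  have "m x * laplacian w m u x = (\<Sum>z\<in>UNIV. m x * (qrate w m x z * (u z - u x)))"
    by (simp add: lap_univ sum_distrib_left)
  also have "\<dots> = (\<Sum>z\<in>UNIV. w x z * (u z - u x))"
    by (rule sum.cong) (use mpos[of x] in \<open>auto simp: qrate_def\<close>)
  finally show ?thesis .
qed

lemma wsum_le: "(\<Sum>z\<in>UNIV. w x z) \<le> m x"
proof -
  have "(\<Sum>z\<in>UNIV. qrate w m x z) = (\<Sum>z\<in>nbrs w x. qrate w m x z)"
    by (rule sum.mono_neutral_right) (auto simp: nbrs_def qrate_def not_adj_w)
  then have "(\<Sum>z\<in>UNIV. w x z / m x) \<le> 1" using deg_le[of x] by (simp add: qrate_def)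
  then have "(\<Sum>z\<in>UNIV. w x z) / m x \<le> 1" by (simp add: sum_divide_distrib)
  then show ?thesis using mpos[of x] by (simp add: divide_le_eq_1)
qed

lemma green:
  "(\<Sum>x\<in>UNIV. m x * g x * laplacian w m u x)
     = -(1/2) * (\<Sum>x\<in>UNIV. \<Sum>z\<in>UNIV. w x z * (u x - u z) * (g x - g z))"
proof -
  define A where "A = (\<Sum>x\<in>UNIV. \<Sum>z\<in>UNIV. w x z * (u z - u x) * g x)"
  have L: "(\<Sum>x\<in>UNIV. m x * g x * laplacian w m u x) = A"
  proof -
    have "(\<Sum>x\<in>UNIV. m x * g x * laplacian w m u x) = (\<Sum>x\<in>UNIV. g x * (m x * laplacian w m u x))"
      by (simp add: mult_ac)
    also have "\<dots> = A" unfolding A_def mlap by (simp add: sum_distrib_left mult_ac)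
    finally show ?thesis .
  qed
  have A2: "A = (\<Sum>x\<in>UNIV. \<Sum>z\<in>UNIV. w x z * (u x - u z) * g z)"
  proof -
    have "A = (\<Sum>z\<in>UNIV. \<Sum>x\<in>UNIV. w x z * (u z - u x) * g x)"
      unfolding A_def by (rule sum.swap)
    also have "\<dots> = (\<Sum>x\<in>UNIV. \<Sum>z\<in>UNIV. w x z * (u x - u z) * g z)"
      by (simp add: wsym[of _ "_::'v"])
    finally show ?thesis .
  qed
  have "A + A = (\<Sum>x\<in>UNIV. \<Sum>z\<in>UNIV. w x z * (u z - u x) * g x + w x z * (u x - u z) * g z)"
  proof -
    have "A + A = (\<Sum>x\<in>UNIV. \<Sum>z\<in>UNIV. w x z * (u z - u x) * g x) + (\<Sum>x\<in>UNIV. \<Sum>z\<in>UNIV. w x z * (u x - u z) * g z)"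
      using A_def A2 by (rule arg_cong2)
    then show ?thesis by (simp add: sum.distrib)
  qed
  also have "\<dots> = (\<Sum>x\<in>UNIV. \<Sum>z\<in>UNIV. - (w x z * (u x - u z) * (g x - g z)))"
    by (intro sum.cong refl) (simp add: algebra_simps)
  also have "\<dots> = - (\<Sum>x\<in>UNIV. \<Sum>z\<in>UNIV. w x z * (u x - u z) * (g x - g z))"
    by (simp add: sum_negf)
  finally show ?thesis using L by simp
qed

end



context cgraph begin

lemma lap_scale: "laplacian w m (\<lambda>z. u z / L) x = laplacian w m u x / L"
  unfolding laplacian_def sum_divide_distrib
  by (rule sum.cong) (simp_all add: diff_divide_distrib[symmetric])

lemma poisson_lip:
  assumes lap: "\<And>x. laplacian w m u x = - f x"
    and flip: "\<And>a b. adj w a b \<Longrightarrow> f a - f b \<le> 1"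
    and ab: "adj w a b"
  shows "u a - u b \<le> 1 / K"
proof -
  define E where "E = {(x, y). adj w x y}"
  define h where "h = (\<lambda>p. u (fst p) - u (snd p))"
  have finE: "finite E"
  proof -
    have "finite ((UNIV::'v set) \<times> (UNIV::'v set))" by (rule finite_cartesian_product) simp_all
    moreover have "E \<subseteq> (UNIV::'v set) \<times> (UNIV::'v set)" by (simp add: subset_UNIV)
    ultimately show ?thesis by (rule rev_finite_subset)
  qed
  have abE: "(a,b) \<in> E" using ab by (simp add: E_def)
  define L where "L = Max (h ` E)"
  have hL: "h p \<le> L" if "p \<in> E" for p unfolding L_def using finE that by (intro Max_ge) auto
  have "L \<in> h ` E" unfolding L_def using finE abE by (intro Max_in) auto
  then obtain a0 b0 where p0: "(a0,b0) \<in> E" "h (a0,b0) = L" by auto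
  have uab: "u a - u b \<le> L" using hL[OF abE] by (simp add: h_def)
  show ?thesis
  proof (cases "L \<le> 0")
    case True
    have "0 < 1 / K" using Kpos by simp
    then show ?thesis using uab True by linarith
  next
    case False
    then have Lp: "L > 0" by simp
    define g where "g = (\<lambda>z. u z / L)"
    have adj0: "adj w a0 b0" using p0 by (simp add: E_def)
    have ne: "b0 \<noteq> a0" using adj0 adj_irr by blast
    have t1: "grad w g a0 b0 = 1"
      using p0 Lp d_adj[OF adj0] by (simp add: grad_def g_def h_def diff_divide_distrib[symmetric])
    have t2: "grad_norm w g = 1"
      unfolding grad_norm_def
    proof (rule antisym)
      show "(SUP p\<in>{(x, y). adj w x y}. ereal (grad w g (fst p) (snd p))) \<le> 1"
      proof (rule SUP_least)
        fix p assume pE: "p \<in> {(x, y). adj w x y}"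
        then obtain x y where p: "p = (x,y)" "adj w x y" by auto
        have "h p \<le> L" using hL pE by (simp add: E_def)
        then have "(u x - u y) / L \<le> 1" using p Lp by (simp add: h_def)
        then show "ereal (grad w g (fst p) (snd p)) \<le> 1"
          using p d_adj[OF p(2)] by (simp add: grad_def g_def diff_divide_distrib[symmetric])
      qed
      have "(a0,b0) \<in> {(x, y). adj w x y}" using adj0 by simp
      then have "ereal (grad w g (fst (a0,b0)) (snd (a0,b0))) \<le> (SUP p\<in>{(x, y). adj w x y}. ereal (grad w g (fst p) (snd p)))"
        by (rule SUP_upper)
      then show "1 \<le> (SUP p\<in>{(x, y). adj w x y}. ereal (grad w g (fst p) (snd p)))"
        using t1 unfolding one_ereal_def by simp
    qed
    have "ereal K \<le> ollivier w m b0 a0" using curv ne by auto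
    also have "\<dots> \<le> ereal (grad w (laplacian w m g) b0 a0)"
      unfolding ollivier_def by (rule INF_lower) (use t1 t2 in auto)
    finally have K1: "K \<le> grad w (laplacian w m g) b0 a0" by simp
    have adj1: "adj w b0 a0" using adj0 adj_sym by auto
    have "grad w (laplacian w m g) b0 a0 = (f a0 - f b0) / L"
      using d_adj[OF adj1] unfolding grad_def g_def lap_scale lap
      by (simp add: diff_divide_distrib[symmetric])
    also have "\<dots> \<le> 1 / L" using flip[OF adj0] Lp by (simp add: divide_right_mono)
    finally have "K \<le> 1 / L" using K1 by simp
    then have "L * K \<le> 1" using Lp by (simp add: pos_le_divide_eq mult.commute)
    then have "L \<le> 1 / K" using Kpos by (simp add: pos_le_divide_eq)
    then show ?thesis using uab by simp
  qed
qed

lemma lap_add: "laplacian w m (\<lambda>x. u x + v x) x = laplacian w m u x + laplacian w m v x"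
  unfolding laplacian_def by (simp add: sum.distrib[symmetric] algebra_simps)

lemma lap_smul: "laplacian w m (\<lambda>x. c * u x) x = c * laplacian w m u x"
  unfolding laplacian_def by (simp add: sum_distrib_left algebra_simps)

lemma adj_path_const:
  assumes "\<And>x z. adj w x z \<Longrightarrow> h x = h z" "(adj w ^^ n) x y"
  shows "h x = h y"
  using assms(2)
proof (induction n arbitrary: y)
  case 0 then show ?case by simp
next
  case (Suc n)
  from Suc.prems obtain z where "(adj w ^^ n) x z" "adj w z y" by (rule relpowp_Suc_E)
  then show ?case using Suc.IH assms(1) by metis
qed

lemma poisson_exists:
  assumes msum: "(\<Sum>x\<in>UNIV. m x) = 1" and fmean: "(\<Sum>x\<in>UNIV. m x * f x) = 0"
  shows "\<exists>u. \<forall>x. laplacian w m u x = - f x"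
proof -
  define T where "T = (\<lambda>u::'v \<Rightarrow> real. (\<lambda>x. - laplacian w m u x + (\<Sum>z\<in>UNIV. m z * u z)))"
  have add: "T (u + v) = T u + T v" for u v
    unfolding T_def plus_fun_def by (rule ext) (simp add: lap_add sum.distrib algebra_simps)
  have scl: "T (\<lambda>x. c * u x) = (\<lambda>x. c * T u x)" for c u
    unfolding T_def by (rule ext) (simp add: lap_smul sum_distrib_left algebra_simps)
  have ker: "h = 0" if Th: "T h = 0" for h
  proof -
    define S where "S = (\<Sum>z\<in>UNIV. m z * h z)"
    have lh: "laplacian w m h x = S" for x
      using fun_cong[OF Th, of x] unfolding T_def S_def by simp
    define Q where "Q = (\<Sum>x\<in>UNIV. \<Sum>z\<in>UNIV. w x z * (h x - h z) * (h x - h z))"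
    have tnn: "0 \<le> w x z * (h x - h z) * (h x - h z)" for x z
      using wnn[of x z] by (simp add: mult.assoc)
    have Qnn: "0 \<le> Q" unfolding Q_def by (intro sum_nonneg tnn)
    have "S * S = (\<Sum>x\<in>UNIV. m x * h x * laplacian w m h x)"
      unfolding lh S_def by (simp add: sum_distrib_right)
    also have "\<dots> = -(1/2) * Q" unfolding Q_def by (rule green)
    finally have SQ: "S * S = -(1/2) * Q" .
    have "S * S \<ge> 0" by simp
    then have Q0: "Q = 0" using SQ Qnn by linarith
    then have S0: "S = 0" using SQ by simp
    have eq: "h x = h z" if "adj w x z" for x z
    proof -
      have "(\<Sum>z\<in>UNIV. w x z * (h x - h z) * (h x - h z)) = 0"
        using Q0 unfolding Q_def by (subst (asm) sum_nonneg_eq_0_iff) (auto intro!: sum_nonneg tnn)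
      then have "w x z * (h x - h z) * (h x - h z) = 0"
        by (subst (asm) sum_nonneg_eq_0_iff) (auto intro!: tnn)
      moreover have "w x z > 0" using that by (simp add: adj_def)
      ultimately show ?thesis by simp
    qed
    obtain x0 :: 'v where True by simp
    have hc: "h y = h x0" for y
      using adj_path_const[of h, OF eq d_path[of x0 y]] by simp
    have "S = (\<Sum>z\<in>UNIV. m z * h x0)" unfolding S_def by (rule sum.cong[OF refl]) (metis hc)
    also have "\<dots> = (\<Sum>z\<in>UNIV. m z) * h x0" by (simp add: sum_distrib_right)
    finally have "S = h x0" using msum by simp
    then show "h = 0" using hc S0 by (auto simp: fun_eq_iff)
  qed
  have "inj T"
  proof (rule injI)
    fix u v assume "T u = T v"
    have "T u = T (v + (u - v))" by simp
    also have "\<dots> = T v + T (u - v)" by (rule add)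
    finally have "T (u - v) = 0" using \<open>T u = T v\<close> by simp
    then have "u - v = 0" by (rule ker)
    then show "u = v" by simp
  qed
  then have "surj T" by (intro inj_surj_fun[OF finV add scl])
  then obtain u where Tu: "T u = f" by (metis surjD)
  define S where "S = (\<Sum>z\<in>UNIV. m z * u z)"
  have Tux: "- laplacian w m u x + S = f x" for x using fun_cong[OF Tu, of x] unfolding T_def S_def by simp
  have G0: "(\<Sum>x\<in>UNIV. m x * 1 * laplacian w m u x) = 0" by (subst green) simp
  have "0 = (\<Sum>x\<in>UNIV. m x * (- laplacian w m u x + S))" using fmean Tux by simp
  also have "\<dots> = (\<Sum>x\<in>UNIV. - (m x * 1 * laplacian w m u x) + S * m x)"
    by (rule sum.cong) (simp_all add: algebra_simps)
  also have "\<dots> = - (\<Sum>x\<in>UNIV. m x * 1 * laplacian w m u x) + S * (\<Sum>x\<in>UNIV. m x)"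
    by (simp only: sum.distrib sum_negf sum_distrib_left)
  also have "\<dots> = S" using G0 msum by simp
  finally have "S = 0" by simp
  then have "laplacian w m u x = - f x" for x using Tux[of x] by linarith
  then show ?thesis by blast
qed

end



lemma exp_ineq:
  fixes h :: real assumes "0 \<le> h" shows "exp h - 1 \<le> h / 2 * (exp h + 1)"
proof -
  define \<phi> where "\<phi> = (\<lambda>t::real. t / 2 * (exp t + 1) - exp t + 1)"
  have "\<phi> 0 \<le> \<phi> h"
  proof (rule DERIV_nonneg_imp_nondecreasing[OF assms])
    fix t :: real assume "0 \<le> t" "t \<le> h"
    have D: "(\<phi> has_real_derivative ((1 + t * exp t - exp t) / 2)) (at t)"
      unfolding \<phi>_def by (auto intro!: derivative_eq_intros simp: field_simps)
    have "1 - t \<le> exp (- t)" using exp_ge_add_one_self[of "-t"] by simp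
    then have "exp t * (1 - t) \<le> exp t * exp (-t)" by (intro mult_left_mono) auto
    then have "exp t * (1 - t) \<le> 1" by (simp add: exp_minus_inverse)
    then have "exp t \<le> 1 + t * exp t" by (simp add: algebra_simps)
    then have "0 \<le> (1 + t * exp t - exp t) / 2" by simp
    then show "\<exists>y. (\<phi> has_real_derivative y) (at t) \<and> 0 \<le> y" using D by blast
  qed
  then show ?thesis by (simp add: \<phi>_def)
qed

lemma exp_pair:
  fixes a b c :: real assumes "\<bar>a - b\<bar> \<le> c"
  shows "\<bar>exp a - exp b\<bar> \<le> c / 2 * (exp a + exp b)"
proof -
  have key: "exp x - exp y \<le> c / 2 * (exp x + exp y)" if "y \<le> x" "x - y \<le> c" for x y :: real
  proof -
    have "exp x - exp y = exp y * (exp (x - y) - 1)" by (simp add: right_diff_distrib exp_add[symmetric])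
    also have "\<dots> \<le> exp y * ((x - y) / 2 * (exp (x - y) + 1))"
      using exp_ineq[of "x - y"] that by (intro mult_left_mono) auto
    also have "\<dots> = (x - y) / 2 * (exp y * exp (x - y) + exp y)" by (simp add: field_simps)
    also have "\<dots> = (x - y) / 2 * (exp x + exp y)" by (simp add: exp_add[symmetric])
    also have "\<dots> \<le> c / 2 * (exp x + exp y)"
      using that by (intro mult_right_mono divide_right_mono) (auto intro: add_nonneg_nonneg)
    finally show ?thesis .
  qed
  show ?thesis
  proof (cases "b \<le> a")
    case True then show ?thesis using key[of b a] assms by simp
  next
    case False then show ?thesis using key[of a b] assms by (simp add: add.commute)
  qed
qed

context cgraph begin

lemma mgf_deriv_bound:
  assumes msum: "(\<Sum>x\<in>UNIV. m x) = 1" and fmean: "(\<Sum>x\<in>UNIV. m x * f x) = 0"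
    and flip: "\<And>a b. adj w a b \<Longrightarrow> f a - f b \<le> 1" and lam: "0 \<le> lam"
  shows "(\<Sum>x\<in>UNIV. m x * f x * exp (lam * f x)) \<le> lam / (2 * K) * (\<Sum>x\<in>UNIV. m x * exp (lam * f x))"
proof -
  obtain u where lap: "\<And>x. laplacian w m u x = - f x" using poisson_exists[OF msum fmean] by blast
  define e where "e = (\<lambda>x. exp (lam * f x))"
  have ulip: "\<bar>u a - u b\<bar> \<le> 1 / K" if "adj w a b" for a b
    using poisson_lip[OF lap flip that] poisson_lip[OF lap flip, of b a] that adj_sym by fastforce
  have flip2: "\<bar>lam * f a - lam * f b\<bar> \<le> lam" if "adj w a b" for a b
  proof -
    have "\<bar>f a - f b\<bar> \<le> 1" using flip[OF that] flip[of b a] that adj_sym by fastforce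
    then have "lam * \<bar>f a - f b\<bar> \<le> lam * 1" using lam by (intro mult_left_mono) auto
    then show ?thesis using lam by (simp add: abs_mult right_diff_distrib[symmetric])
  qed
  have pt: "w x z * (u x - u z) * (e x - e z) \<le> w x z * (lam / (2 * K) * (e x + e z))" for x z
  proof (cases "adj w x z")
    case True
    have "(u x - u z) * (e x - e z) \<le> \<bar>u x - u z\<bar> * \<bar>e x - e z\<bar>"
      by (metis abs_ge_self abs_mult)
    also have "\<dots> \<le> (1 / K) * (lam / 2 * (e x + e z))"
      using ulip[OF True] exp_pair[OF flip2[OF True]] Kpos unfolding e_def
      by (intro mult_mono) auto
    also have "\<dots> = lam / (2 * K) * (e x + e z)" by simp
    finally have "(u x - u z) * (e x - e z) \<le> lam / (2 * K) * (e x + e z)" .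
    then have "w x z * ((u x - u z) * (e x - e z)) \<le> w x z * (lam / (2 * K) * (e x + e z))"
      by (rule mult_left_mono[OF _ wnn])
    then show ?thesis by (metis mult.assoc)
  next
    case False then show ?thesis by (simp add: not_adj_w)
  qed
  have "(\<Sum>x\<in>UNIV. m x * f x * exp (lam * f x)) = - (\<Sum>x\<in>UNIV. m x * e x * laplacian w m u x)"
    by (simp add: lap e_def sum_negf[symmetric] mult_ac)
  also have "\<dots> = 1/2 * (\<Sum>x\<in>UNIV. \<Sum>z\<in>UNIV. w x z * (u x - u z) * (e x - e z))"
    by (simp add: green)
  also have "\<dots> \<le> 1/2 * (\<Sum>x\<in>UNIV. \<Sum>z\<in>UNIV. w x z * (lam / (2 * K) * (e x + e z)))"
    by (intro mult_left_mono sum_mono pt) auto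
  also have "(\<Sum>x\<in>UNIV. \<Sum>z\<in>UNIV. w x z * (lam / (2 * K) * (e x + e z)))
      = lam / (2 * K) * ((\<Sum>x\<in>UNIV. \<Sum>z\<in>UNIV. w x z * e x) + (\<Sum>x\<in>UNIV. \<Sum>z\<in>UNIV. w x z * e z))"
  proof -
    have "(\<Sum>x\<in>UNIV. \<Sum>z\<in>UNIV. w x z * (lam / (2 * K) * (e x + e z)))
        = (\<Sum>x\<in>UNIV. \<Sum>z\<in>UNIV. lam / (2 * K) * (w x z * e x) + lam / (2 * K) * (w x z * e z))"
      by (intro sum.cong refl) (simp add: algebra_simps add_divide_distrib)
    then show ?thesis by (simp only: sum.distrib sum_distrib_left distrib_left)
  qed
  also have "(\<Sum>x\<in>UNIV. \<Sum>z\<in>UNIV. w x z * e z) = (\<Sum>x\<in>UNIV. \<Sum>z\<in>UNIV. w x z * e x)"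
  proof -
    have "(\<Sum>x\<in>UNIV. \<Sum>z\<in>UNIV. w x z * e z) = (\<Sum>z\<in>UNIV. \<Sum>x\<in>UNIV. w x z * e z)" by (rule sum.swap)
    also have "\<dots> = (\<Sum>x\<in>UNIV. \<Sum>z\<in>UNIV. w x z * e x)" by (simp add: wsym[of _ "_::'v"])
    finally show ?thesis .
  qed
  also have "1/2 * (lam / (2 * K) * ((\<Sum>x\<in>UNIV. \<Sum>z\<in>UNIV. w x z * e x) + (\<Sum>x\<in>UNIV. \<Sum>z\<in>UNIV. w x z * e x)))
      = lam / (2 * K) * (\<Sum>x\<in>UNIV. e x * (\<Sum>z\<in>UNIV. w x z))"
    by (simp add: sum_distrib_left mult_ac)
  also have "\<dots> \<le> lam / (2 * K) * (\<Sum>x\<in>UNIV. e x * m x)"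
    using lam Kpos wsum_le by (intro mult_left_mono sum_mono) (auto simp: e_def)
  also have "\<dots> = lam / (2 * K) * (\<Sum>x\<in>UNIV. m x * exp (lam * f x))" by (simp add: e_def mult_ac)
  finally show ?thesis .
qed

end



context cgraph begin

lemma mgf_bound:
  assumes msum: "(\<Sum>x\<in>UNIV. m x) = 1" and fmean: "(\<Sum>x\<in>UNIV. m x * f x) = 0"
    and flip: "\<And>a b. adj w a b \<Longrightarrow> f a - f b \<le> 1" and lam: "0 \<le> lam"
  shows "(\<Sum>x\<in>UNIV. m x * exp (lam * f x)) \<le> exp (lam * lam / (4 * K))"
proof -
  define Z where "Z = (\<lambda>t. \<Sum>x\<in>UNIV. m x * exp (t * f x))"
  define Z' where "Z' = (\<lambda>t. \<Sum>x\<in>UNIV. m x * f x * exp (t * f x))"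
  define E where "E = (\<lambda>t::real. exp (- (t * t) / (4 * K)))"
  define \<psi> where "\<psi> = (\<lambda>t. Z t * E t)"
  have dZ: "(Z has_real_derivative Z' t) (at t)" for t
    unfolding Z_def Z'_def
  proof (rule DERIV_sum)
    fix x show "((\<lambda>t. m x * exp (t * f x)) has_real_derivative m x * f x * exp (t * f x)) (at t)"
      by (auto intro!: derivative_eq_intros simp: mult_ac)
  qed
  have dE: "(E has_real_derivative E t * (- t / (2 * K))) (at t)" for t
    unfolding E_def using Kpos by (auto intro!: derivative_eq_intros simp: field_simps)
  have "\<psi> lam \<le> \<psi> 0"
  proof (rule DERIV_nonpos_imp_nonincreasing[OF lam])
    fix t :: real assume t: "0 \<le> t" "t \<le> lam"
    have D: "(\<psi> has_real_derivative Z t * (E t * (- t / (2 * K))) + Z' t * E t) (at t)"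
      unfolding \<psi>_def by (rule DERIV_mult'[OF dZ dE])
    have "Z' t \<le> t / (2 * K) * Z t"
      unfolding Z_def Z'_def by (rule mgf_deriv_bound[OF msum fmean flip t(1)])
    moreover have "E t > 0" by (simp add: E_def)
    ultimately have "E t * (Z' t - t / (2 * K) * Z t) \<le> 0"
      by (intro mult_nonneg_nonpos) auto
    moreover have "Z t * (E t * (- t / (2 * K))) + Z' t * E t = E t * (Z' t - t / (2 * K) * Z t)"
      by (simp add: algebra_simps)
    ultimately have "Z t * (E t * (- t / (2 * K))) + Z' t * E t \<le> 0" by simp
    then show "\<exists>y. (\<psi> has_real_derivative y) (at t) \<and> y \<le> 0" using D by blast
  qed
  then have "Z lam * E lam \<le> 1" by (simp add: \<psi>_def E_def Z_def msum)
  then have "Z lam * E lam * exp (lam * lam / (4 * K)) \<le> exp (lam * lam / (4 * K))"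
    by (simp add: mult_right_mono)
  moreover have "E lam * exp (lam * lam / (4 * K)) = 1"
    unfolding E_def by (simp add: exp_add[symmetric])
  ultimately show ?thesis unfolding Z_def by (simp add: mult.assoc)
qed

lemma conc:
  assumes msum: "(\<Sum>x\<in>UNIV. m x) = 1" and fmean: "(\<Sum>x\<in>UNIV. m x * f x) = 0"
    and flip: "\<And>a b. adj w a b \<Longrightarrow> f a - f b \<le> 1" and r: "r > 0"
  shows "(\<Sum>x\<in>{x. f x > r}. m x) \<le> exp (- K * r\<^sup>2)"
proof -
  define lam where "lam = 2 * K * r"
  have lam0: "0 \<le> lam" using Kpos r by (simp add: lam_def)
  have "(\<Sum>x\<in>{x. f x > r}. m x) \<le> (\<Sum>x\<in>{x. f x > r}. m x * exp (lam * f x) * exp (- (lam * r)))"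
  proof (rule sum_mono)
    fix x assume "x \<in> {x. f x > r}"
    then have "0 \<le> lam * f x - lam * r" using lam0 by (simp add: right_diff_distrib[symmetric])
    then have "1 \<le> exp (lam * f x - lam * r)" by simp
    then have "1 \<le> exp (lam * f x) * exp (- (lam * r))" by (simp add: exp_add[symmetric])
    then have "m x * 1 \<le> m x * (exp (lam * f x) * exp (- (lam * r)))"
      using mpos[of x] by (intro mult_left_mono) auto
    then show "m x \<le> m x * exp (lam * f x) * exp (- (lam * r))" by (simp add: mult.assoc)
  qed
  also have "\<dots> \<le> (\<Sum>x\<in>UNIV. m x * exp (lam * f x) * exp (- (lam * r)))"
  proof (rule sum_mono2)
    fix x show "0 \<le> m x * exp (lam * f x) * exp (- (lam * r))" using mpos[of x] by simp
  qed auto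
  also have "\<dots> = (\<Sum>x\<in>UNIV. m x * exp (lam * f x)) * exp (- (lam * r))"
    by (simp add: sum_distrib_right)
  also have "\<dots> \<le> exp (lam * lam / (4 * K)) * exp (- (lam * r))"
  proof (rule mult_right_mono)
    show "(\<Sum>x\<in>UNIV. m x * exp (lam * f x)) \<le> exp (lam * lam / (4 * K))"
      by (rule mgf_bound[OF msum fmean]) (use flip lam0 in auto)
    show "0 \<le> exp (- (lam * r))" by (rule less_imp_le, rule exp_gt_zero)
  qed
  also have "\<dots> = exp (lam * lam / (4 * K) - lam * r)" by (simp add: exp_add[symmetric])
  also have "lam * lam / (4 * K) - lam * r = - K * r\<^sup>2"
    using Kpos unfolding lam_def by (simp add: field_simps power2_eq_square)
  finally show ?thesis .
qed

end

theorem theorem3p1: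
  fixes w :: "'v::countable \<Rightarrow> 'v \<Rightarrow> real" and m :: "'v \<Rightarrow> real"
    and f :: "'v \<Rightarrow> real" and K r :: real
  assumes "mwgraph w m"
    and "locally_finite w"
    and "connected_graph w"
    and "K > 0"
    and "Deg_max w m \<le> 1"
    and "(m has_sum 1) UNIV"
    and "\<forall>x y. x \<noteq> y \<longrightarrow> ollivier w m x y \<ge> ereal K"
    and "(\<lambda>x. \<bar>m x * f x\<bar>) summable_on UNIV"
    and "(\<Sum>\<^sub>\<infinity>x. m x * f x) = 0"
    and "grad_norm w f \<le> 1"
    and "r > 0"
  shows "(\<Sum>\<^sub>\<infinity>x\<in>{x. f x > r}. m x) \<le> exp (- K * r\<^sup>2)"
proof -
  interpret cgraph w m K
    by unfold_locales (use assms in auto)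
  have "(m has_sum (\<Sum>x\<in>UNIV. m x)) UNIV" by (rule has_sum_finite) simp
  then have msum: "(\<Sum>x\<in>UNIV. m x) = 1" using assms(6) by (rule has_sum_unique)
  have fmean: "(\<Sum>x\<in>UNIV. m x * f x) = 0" using assms(9) by simp
  have flip: "\<And>a b. adj w a b \<Longrightarrow> f a - f b \<le> 1" using lip_edge[OF assms(10)] by blast
  have fin: "finite {x. f x > r}" by (rule finite_subset[OF subset_UNIV finV])
  have "(\<Sum>\<^sub>\<infinity>x\<in>{x. f x > r}. m x) = (\<Sum>x\<in>{x. f x > r}. m x)" using fin by simp
  also have "\<dots> \<le> exp (- K * r\<^sup>2)" by (rule conc[OF msum fmean flip assms(11)])
  finally show ?thesis .
qed


end
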